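(* Let $\mathcal A\subseteq\mathrm{Mat}(\mathbb{Z}^D,p)$ be an invertible subalgebra with spread $\ell$, and let $\mathcal B$ be its commutant within $\mathrm{Mat}(\mathbb{Z}^D,p)$. Then both $\mathcal A$ and $\mathcal B$ are VS.
   Context: For $p:\mathbb{Z}^D\to\mathbb{Z}_{>0}$ and finite $S$, $\mathrm{Mat}(S,p)=\bigotimes_{s\in S}M_{p(s)}(\mathbb{C})$ with embeddings by tensoring identities; $\mathrm{Mat}(\mathbb{Z}^D,p)$ is the union. $\mathrm{Supp}(x)$ is the smallest finite $S$ with $x\in\mathrm{Mat}(S,p)$; $S^{+\ell}$ is the set of sites at $\ell_\infty$-distance at most $\ell$ from $S$. A unital $*$-subalgebra $\mathcal A$ is invertible with spread $\ell>0$ if every $x\in\mathrm{Mat}(\mathbb{Z}^D,p)$ is a finite sum $x=\sum_ia_ib_i$ with $a_i\in\mathcal A$, $b_i$ in the commutant of $\mathcal A$ within $\mathrm{Mat}(\mathbb{Z}^D,p)$, and $\mathrm{Supp}(a_i),\mathrm{Supp}(b_i)\subseteq\mathrm{Supp}(x)^{+\ell}$. A $*$-subalgebra $\mathcal C$ is VS if there is $\ell'>0$ such that for every $c\in\mathcal C\setminus\mathbb{C}\mathbf 1$ and every $s\in\mathrm{Supp}(c)$ there is $w\in\mathcal C\cap\mathrm{Mat}(\{s\}^{+\ell'},p)$ with $[c,w]\neq0$. *)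

theory Defs
  imports Complex_Main
begin

text \<open>Sites of the lattice Z^D are functions 'd => int for a finite index type 'd
  (D = CARD('d)). The quasi-local algebra Mat(Z^D,p) is represented faithfully
  on the span of product basis vectors with finitely many sites away from the
  reference state 0: an operator is a kernel on pairs of such configurations.\<close>

type_synonym 'd site = "'d \<Rightarrow> int"
type_synonym 'd cfg = "'d site \<Rightarrow> nat"
type_synonym 'd op = "'d cfg \<Rightarrow> 'd cfg \<Rightarrow> complex"

definition valid_cfg :: "('d site \<Rightarrow> nat) \<Rightarrow> 'd cfg \<Rightarrow> bool" where
  "valid_cfg p \<sigma> \<longleftrightarrow> (\<forall>s. \<sigma> s < p s) \<and> finite {s. \<sigma> s \<noteq> 0}"

definition agree_off :: "'d site set \<Rightarrow> 'd cfg \<Rightarrow> 'd cfg \<Rightarrow> bool" where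
  "agree_off S \<sigma> \<tau> \<longleftrightarrow> (\<forall>s. s \<notin> S \<longrightarrow> \<sigma> s = \<tau> s)"

definition agree_on :: "'d site set \<Rightarrow> 'd cfg \<Rightarrow> 'd cfg \<Rightarrow> bool" where
  "agree_on S \<sigma> \<tau> \<longleftrightarrow> (\<forall>s\<in>S. \<sigma> s = \<tau> s)"

text \<open>inMat p S K: K is (the image of) an element of Mat(S,p) = tensor product over S
  of M_{p(s)}(C), embedded by tensoring with identities.\<close>
definition inMat :: "('d site \<Rightarrow> nat) \<Rightarrow> 'd site set \<Rightarrow> 'd op \<Rightarrow> bool" where
  "inMat p S K \<longleftrightarrow> finite S
     \<and> (\<forall>\<sigma> \<tau>. \<not> (valid_cfg p \<sigma> \<and> valid_cfg p \<tau>) \<longrightarrow> K \<sigma> \<tau> = 0)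
     \<and> (\<forall>\<sigma> \<tau>. valid_cfg p \<sigma> \<longrightarrow> valid_cfg p \<tau> \<longrightarrow> \<not> agree_off S \<sigma> \<tau> \<longrightarrow> K \<sigma> \<tau> = 0)
     \<and> (\<forall>\<sigma> \<tau> \<sigma>' \<tau>'. valid_cfg p \<sigma> \<longrightarrow> valid_cfg p \<tau> \<longrightarrow> valid_cfg p \<sigma>' \<longrightarrow> valid_cfg p \<tau>' \<longrightarrow>
          agree_off S \<sigma> \<tau> \<longrightarrow> agree_off S \<sigma>' \<tau>' \<longrightarrow> agree_on S \<sigma> \<sigma>' \<longrightarrow> agree_on S \<tau> \<tau>' \<longrightarrow>
          K \<sigma> \<tau> = K \<sigma>' \<tau>')"

definition MatZ :: "('d site \<Rightarrow> nat) \<Rightarrow> 'd op set" where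
  "MatZ p = {K. \<exists>S. inMat p S K}"

definition Supp :: "('d site \<Rightarrow> nat) \<Rightarrow> 'd op \<Rightarrow> 'd site set" where
  "Supp p K = \<Inter> {S. inMat p S K}"

definition nbhd :: "'d site set \<Rightarrow> nat \<Rightarrow> 'd site set" where
  "nbhd S l = {t. \<exists>s\<in>S. \<forall>i. \<bar>t i - s i\<bar> \<le> int l}"

definition opmult :: "('d site \<Rightarrow> nat) \<Rightarrow> 'd op \<Rightarrow> 'd op \<Rightarrow> 'd op" where
  "opmult p K L = (\<lambda>\<sigma> \<tau>. \<Sum>\<rho>\<in>{\<rho>. valid_cfg p \<rho> \<and> K \<sigma> \<rho> \<noteq> 0}. K \<sigma> \<rho> * L \<rho> \<tau>)"

definition opadd :: "'d op \<Rightarrow> 'd op \<Rightarrow> 'd op" where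
  "opadd K L = (\<lambda>\<sigma> \<tau>. K \<sigma> \<tau> + L \<sigma> \<tau>)"

definition opscal :: "complex \<Rightarrow> 'd op \<Rightarrow> 'd op" where
  "opscal c K = (\<lambda>\<sigma> \<tau>. c * K \<sigma> \<tau>)"

definition opadj :: "'d op \<Rightarrow> 'd op" where
  "opadj K = (\<lambda>\<sigma> \<tau>. cnj (K \<tau> \<sigma>))"

definition opone :: "('d site \<Rightarrow> nat) \<Rightarrow> 'd op" where
  "opone p = (\<lambda>\<sigma> \<tau>. if valid_cfg p \<sigma> \<and> \<sigma> = \<tau> then 1 else 0)"

definition unital_star_subalg :: "('d site \<Rightarrow> nat) \<Rightarrow> 'd op set \<Rightarrow> bool" where
  "unital_star_subalg p A \<longleftrightarrow> A \<subseteq> MatZ p \<and> opone p \<in> A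
     \<and> (\<forall>x\<in>A. \<forall>y\<in>A. opadd x y \<in> A \<and> opmult p x y \<in> A)
     \<and> (\<forall>c. \<forall>x\<in>A. opscal c x \<in> A) \<and> (\<forall>x\<in>A. opadj x \<in> A)"

definition commutant :: "('d site \<Rightarrow> nat) \<Rightarrow> 'd op set \<Rightarrow> 'd op set" where
  "commutant p A = {b \<in> MatZ p. \<forall>a\<in>A. opmult p a b = opmult p b a}"

definition invertible_spread :: "('d site \<Rightarrow> nat) \<Rightarrow> 'd op set \<Rightarrow> nat \<Rightarrow> bool" where
  "invertible_spread p A l \<longleftrightarrow> unital_star_subalg p A \<and> 0 < l \<and>
     (\<forall>x\<in>MatZ p. \<exists>(n::nat) a b.
        x = (\<lambda>\<sigma> \<tau>. \<Sum>i<n. opmult p (a i) (b i) \<sigma> \<tau>) \<and>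
        (\<forall>i<n. a i \<in> A \<and> b i \<in> commutant p A \<and>
               Supp p (a i) \<subseteq> nbhd (Supp p x) l \<and> Supp p (b i) \<subseteq> nbhd (Supp p x) l))"

definition VS :: "('d site \<Rightarrow> nat) \<Rightarrow> 'd op set \<Rightarrow> bool" where
  "VS p C \<longleftrightarrow> (\<exists>l'::nat. 0 < l' \<and>
     (\<forall>c\<in>C. c \<notin> range (\<lambda>z. opscal z (opone p)) \<longrightarrow>
        (\<forall>s\<in>Supp p c. \<exists>w\<in>C. inMat p (nbhd {s} l') w \<and> opmult p c w \<noteq> opmult p w c)))"

end

theory Submission
  imports Defs "HOL-Library.FuncSet"
begin

definition Wc :: "('d site \<Rightarrow> nat) \<Rightarrow> 'd site set \<Rightarrow> 'd cfg \<Rightarrow> 'd cfg set" where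
  "Wc p U \<sigma> = {\<rho>. valid_cfg p \<rho> \<and> agree_off U \<sigma> \<rho>}"

definition lk :: "('d site \<Rightarrow> nat) \<Rightarrow> 'd site set \<Rightarrow> 'd op \<Rightarrow> bool" where
  "lk p U K \<longleftrightarrow> finite U \<and> (\<forall>\<sigma> \<tau>. K \<sigma> \<tau> \<noteq> 0 \<longrightarrow> valid_cfg p \<sigma> \<and> valid_cfg p \<tau> \<and> agree_off U \<sigma> \<tau>)"

lemma finite_Wc:
  assumes "finite U" shows "finite (Wc p U \<sigma>)"
proof -
  have inj: "inj_on (\<lambda>\<rho>. restrict \<rho> U) (Wc p U \<sigma>)"
  proof (rule inj_onI)
    fix x y assume x: "x \<in> Wc p U \<sigma>" and y: "y \<in> Wc p U \<sigma>" and e: "restrict x U = restrict y U"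
    show "x = y"
    proof
      fix t show "x t = y t"
      proof (cases "t \<in> U")
        case True then show ?thesis using e by (metis restrict_apply')
      next
        case False then show ?thesis using x y by (simp add: Wc_def agree_off_def)
      qed
    qed
  qed
  have sub: "(\<lambda>\<rho>. restrict \<rho> U) ` Wc p U \<sigma> \<subseteq> PiE U (\<lambda>t. {..<p t})"
    by (auto simp: Wc_def valid_cfg_def restrict_PiE_iff)
  have "finite (PiE U (\<lambda>t. {..<p t}))" using assms by (intro finite_PiE) auto
  then have "finite ((\<lambda>\<rho>. restrict \<rho> U) ` Wc p U \<sigma>)" using sub finite_subset by blast
  then show ?thesis using inj finite_imageD by blast
qed

lemma lk_nz_sub: "lk p U K \<Longrightarrow> {\<rho>. valid_cfg p \<rho> \<and> K \<sigma> \<rho> \<noteq> 0} \<subseteq> Wc p U \<sigma>"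
  by (auto simp: lk_def Wc_def)

lemma lk_nz_finite: "lk p U K \<Longrightarrow> finite {\<rho>. valid_cfg p \<rho> \<and> K \<sigma> \<rho> \<noteq> 0}"
  using lk_nz_sub[of p U K \<sigma>] finite_Wc[of U p \<sigma>] unfolding lk_def by (meson finite_subset lk_def)

lemma opmult_sum:
  assumes fN: "finite {\<rho>. valid_cfg p \<rho> \<and> K \<sigma> \<rho> \<noteq> 0}"
    and fV: "finite V" and Vv: "\<forall>\<rho>\<in>V. valid_cfg p \<rho>"
    and out: "\<And>\<rho>. valid_cfg p \<rho> \<Longrightarrow> \<rho> \<notin> V \<Longrightarrow> K \<sigma> \<rho> * L \<rho> \<tau> = 0"
  shows "opmult p K L \<sigma> \<tau> = (\<Sum>\<rho>\<in>V. K \<sigma> \<rho> * L \<rho> \<tau>)"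
proof -
  let ?N = "{\<rho>. valid_cfg p \<rho> \<and> K \<sigma> \<rho> \<noteq> 0}"
  have "opmult p K L \<sigma> \<tau> = (\<Sum>\<rho>\<in>?N. K \<sigma> \<rho> * L \<rho> \<tau>)" by (simp add: opmult_def)
  also have "\<dots> = (\<Sum>\<rho>\<in>?N \<union> V. K \<sigma> \<rho> * L \<rho> \<tau>)"
    by (rule sum.mono_neutral_left) (use fN fV Vv in auto)
  also have "\<dots> = (\<Sum>\<rho>\<in>V. K \<sigma> \<rho> * L \<rho> \<tau>)"
    by (rule sum.mono_neutral_right) (use fN fV out in auto)
  finally show ?thesis .
qed

lemma opmult_Wc:
  assumes "lk p U K"
  shows "opmult p K L \<sigma> \<tau> = (\<Sum>\<rho>\<in>Wc p U \<sigma>. K \<sigma> \<rho> * L \<rho> \<tau>)"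
proof (rule opmult_sum)
  show "finite {\<rho>. valid_cfg p \<rho> \<and> K \<sigma> \<rho> \<noteq> 0}" by (rule lk_nz_finite[OF assms])
  show "finite (Wc p U \<sigma>)" using assms by (intro finite_Wc) (simp add: lk_def)
  show "\<forall>\<rho>\<in>Wc p U \<sigma>. valid_cfg p \<rho>" by (simp add: Wc_def)
  fix \<rho> assume "valid_cfg p \<rho>" "\<rho> \<notin> Wc p U \<sigma>"
  then have "K \<sigma> \<rho> = 0" using assms unfolding lk_def Wc_def by blast
  then show "K \<sigma> \<rho> * L \<rho> \<tau> = 0" by simp
qed

lemma lk_mono: "lk p U K \<Longrightarrow> U \<subseteq> U' \<Longrightarrow> finite U' \<Longrightarrow> lk p U' K"
  by (auto simp: lk_def agree_off_def)

lemma inMat_lk: "inMat p S K \<Longrightarrow> lk p S K"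
  unfolding inMat_def lk_def by blast

lemma lk_opmult:
  assumes "lk p U K" "lk p V L" shows "lk p (U \<union> V) (opmult p K L)"
  unfolding lk_def
proof (rule conjI)
  show "finite (U \<union> V)" using assms by (simp add: lk_def)
  show "\<forall>\<sigma> \<tau>. opmult p K L \<sigma> \<tau> \<noteq> 0 \<longrightarrow> valid_cfg p \<sigma> \<and> valid_cfg p \<tau> \<and> agree_off (U \<union> V) \<sigma> \<tau>"
  proof (intro allI impI)
  fix \<sigma> \<tau> assume "opmult p K L \<sigma> \<tau> \<noteq> 0"
  then obtain \<rho> where "K \<sigma> \<rho> * L \<rho> \<tau> \<noteq> 0"
    unfolding opmult_def by (auto elim: sum.not_neutral_contains_not_neutral)
  then have "K \<sigma> \<rho> \<noteq> 0" "L \<rho> \<tau> \<noteq> 0" by auto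
  then have "valid_cfg p \<sigma>" "valid_cfg p \<tau>" "agree_off U \<sigma> \<rho>" "agree_off V \<rho> \<tau>"
    using assms by (auto simp: lk_def)
  then show "valid_cfg p \<sigma> \<and> valid_cfg p \<tau> \<and> agree_off (U \<union> V) \<sigma> \<tau>"
    by (auto simp: agree_off_def)
  qed
qed

lemma Wc_shift: "agree_off U \<sigma> \<rho> \<Longrightarrow> U \<subseteq> U' \<Longrightarrow> Wc p U' \<rho> = Wc p U' \<sigma>"
  by (auto simp: Wc_def agree_off_def)

lemma opmult_assoc:
  assumes K: "lk p U K" and L: "lk p V L"
  shows "opmult p (opmult p K L) M = opmult p K (opmult p L M)"
proof (intro ext)
  fix \<sigma> \<tau>
  let ?W = "Wc p (U \<union> V) \<sigma>"
  have KW: "lk p (U \<union> V) K" by (rule lk_mono[OF K]) (use K L in \<open>auto simp: lk_def\<close>)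
  have LW: "lk p (U \<union> V) L" by (rule lk_mono[OF L]) (use K L in \<open>auto simp: lk_def\<close>)
  have KL: "lk p (U \<union> V) (opmult p K L)" using lk_opmult K L by blast
  have fW: "finite ?W" using K L by (intro finite_Wc) (auto simp: lk_def)
  have "opmult p (opmult p K L) M \<sigma> \<tau> = (\<Sum>\<mu>\<in>?W. opmult p K L \<sigma> \<mu> * M \<mu> \<tau>)"
    by (rule opmult_Wc[OF KL])
  also have "\<dots> = (\<Sum>\<mu>\<in>?W. (\<Sum>\<rho>\<in>?W. K \<sigma> \<rho> * L \<rho> \<mu>) * M \<mu> \<tau>)"
    by (simp add: opmult_Wc[OF KW])
  also have "\<dots> = (\<Sum>\<mu>\<in>?W. \<Sum>\<rho>\<in>?W. K \<sigma> \<rho> * (L \<rho> \<mu> * M \<mu> \<tau>))"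
    by (simp add: sum_distrib_right mult.assoc)
  also have "\<dots> = (\<Sum>\<rho>\<in>?W. \<Sum>\<mu>\<in>?W. K \<sigma> \<rho> * (L \<rho> \<mu> * M \<mu> \<tau>))"
    by (rule sum.swap)
  also have "\<dots> = (\<Sum>\<rho>\<in>?W. K \<sigma> \<rho> * opmult p L M \<rho> \<tau>)"
  proof (rule sum.cong[OF refl])
    fix \<rho> assume "\<rho> \<in> ?W"
    show "(\<Sum>\<mu>\<in>?W. K \<sigma> \<rho> * (L \<rho> \<mu> * M \<mu> \<tau>)) = K \<sigma> \<rho> * opmult p L M \<rho> \<tau>"
    proof (cases "K \<sigma> \<rho> = 0")
      case True then show ?thesis by simp
    next
      case False
      then have "agree_off U \<sigma> \<rho>" using K by (simp add: lk_def)
      then have WW: "Wc p (U \<union> V) \<rho> = ?W" by (rule Wc_shift) auto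
      have "opmult p L M \<rho> \<tau> = (\<Sum>\<mu>\<in>Wc p (U \<union> V) \<rho>. L \<rho> \<mu> * M \<mu> \<tau>)"
        by (rule opmult_Wc[OF LW])
      then show ?thesis by (simp only: WW sum_distrib_left)
    qed
  qed
  also have "\<dots> = opmult p K (opmult p L M) \<sigma> \<tau>"
    by (rule opmult_Wc[OF KW, symmetric])
  finally show "opmult p (opmult p K L) M \<sigma> \<tau> = opmult p K (opmult p L M) \<sigma> \<tau>" .
qed

lemma opmult_sum_right:
  assumes K: "lk p U K"
  shows "opmult p K (\<lambda>\<sigma> \<tau>. \<Sum>i<n. X i \<sigma> \<tau>) = (\<lambda>\<sigma> \<tau>. \<Sum>i<n. opmult p K (X i) \<sigma> \<tau>)"
proof (intro ext)
  fix \<sigma> \<tau>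
  show "opmult p K (\<lambda>\<sigma> \<tau>. \<Sum>i<n. X i \<sigma> \<tau>) \<sigma> \<tau> = (\<Sum>i<n. opmult p K (X i) \<sigma> \<tau>)"
  proof -
    have "opmult p K (\<lambda>\<sigma> \<tau>. \<Sum>i<n. X i \<sigma> \<tau>) \<sigma> \<tau> = (\<Sum>\<rho>\<in>Wc p U \<sigma>. \<Sum>i<n. K \<sigma> \<rho> * X i \<rho> \<tau>)"
      by (simp add: opmult_Wc[OF K] sum_distrib_left)
    also have "\<dots> = (\<Sum>i<n. \<Sum>\<rho>\<in>Wc p U \<sigma>. K \<sigma> \<rho> * X i \<rho> \<tau>)" by (rule sum.swap)
    also have "\<dots> = (\<Sum>i<n. opmult p K (X i) \<sigma> \<tau>)" by (simp add: opmult_Wc[OF K])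
    finally show ?thesis .
  qed
qed

lemma opmult_sum_left:
  assumes X: "\<And>i. i < n \<Longrightarrow> lk p U (X i)" and fU: "finite U"
  shows "opmult p (\<lambda>\<sigma> \<tau>. \<Sum>i<n. X i \<sigma> \<tau>) M = (\<lambda>\<sigma> \<tau>. \<Sum>i<n. opmult p (X i) M \<sigma> \<tau>)"
proof (intro ext)
  fix \<sigma> \<tau>
  have S: "lk p U (\<lambda>\<sigma> \<tau>. \<Sum>i<n. X i \<sigma> \<tau>)"
    unfolding lk_def
  proof (rule conjI)
    show "finite U" by fact
    show "\<forall>\<sigma> \<tau>. (\<Sum>i<n. X i \<sigma> \<tau>) \<noteq> 0 \<longrightarrow> valid_cfg p \<sigma> \<and> valid_cfg p \<tau> \<and> agree_off U \<sigma> \<tau>"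
    proof (intro allI impI)
    fix \<sigma> \<tau> assume "(\<Sum>i<n. X i \<sigma> \<tau>) \<noteq> 0"
    then obtain i where "i < n" "X i \<sigma> \<tau> \<noteq> 0"
      by (auto elim: sum.not_neutral_contains_not_neutral)
    then show "valid_cfg p \<sigma> \<and> valid_cfg p \<tau> \<and> agree_off U \<sigma> \<tau>" using X by (auto simp: lk_def)
    qed
  qed
  have "opmult p (\<lambda>\<sigma> \<tau>. \<Sum>i<n. X i \<sigma> \<tau>) M \<sigma> \<tau> = (\<Sum>\<rho>\<in>Wc p U \<sigma>. (\<Sum>i<n. X i \<sigma> \<rho>) * M \<rho> \<tau>)"
    by (rule opmult_Wc[OF S])
  also have "\<dots> = (\<Sum>i<n. \<Sum>\<rho>\<in>Wc p U \<sigma>. X i \<sigma> \<rho> * M \<rho> \<tau>)"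
    by (simp add: sum_distrib_right) (rule sum.swap)
  also have "\<dots> = (\<Sum>i<n. opmult p (X i) M \<sigma> \<tau>)"
    by (rule sum.cong[OF refl]) (simp add: opmult_Wc[OF X])
  finally show "opmult p (\<lambda>\<sigma> \<tau>. \<Sum>i<n. X i \<sigma> \<tau>) M \<sigma> \<tau> = (\<Sum>i<n. opmult p (X i) M \<sigma> \<tau>)" .
qed



definition Eu :: "('d site \<Rightarrow> nat) \<Rightarrow> 'd site \<Rightarrow> nat \<Rightarrow> nat \<Rightarrow> 'd op" where
  "Eu p s i j = (\<lambda>\<sigma> \<tau>. if valid_cfg p \<sigma> \<and> valid_cfg p \<tau> \<and> agree_off {s} \<sigma> \<tau> \<and> \<sigma> s = i \<and> \<tau> s = j then 1 else 0)"

lemma valid_upd: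
  assumes "valid_cfg p \<sigma>" "k < p s" shows "valid_cfg p (\<sigma>(s:=k))"
proof -
  have "{t. (\<sigma>(s:=k)) t \<noteq> 0} \<subseteq> insert s {t. \<sigma> t \<noteq> 0}" by auto
  moreover have "finite (insert s {t. \<sigma> t \<noteq> 0})" using assms(1) by (simp add: valid_cfg_def)
  ultimately have "finite {t. (\<sigma>(s:=k)) t \<noteq> 0}" by (rule finite_subset)
  moreover have "\<forall>t. (\<sigma>(s:=k)) t < p t" using assms by (simp add: valid_cfg_def)
  ultimately show ?thesis by (simp add: valid_cfg_def)
qed

lemma inMat_D3:
  assumes "inMat p S K" "valid_cfg p \<sigma>" "valid_cfg p \<tau>" "valid_cfg p \<sigma>'" "valid_cfg p \<tau>'"
    "agree_off S \<sigma> \<tau>" "agree_off S \<sigma>' \<tau>'" "agree_on S \<sigma> \<sigma>'" "agree_on S \<tau> \<tau>'"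
  shows "K \<sigma> \<tau> = K \<sigma>' \<tau>'"
proof -
  have "\<forall>\<sigma> \<tau> \<sigma>' \<tau>'. valid_cfg p \<sigma> \<longrightarrow> valid_cfg p \<tau> \<longrightarrow> valid_cfg p \<sigma>' \<longrightarrow> valid_cfg p \<tau>' \<longrightarrow>
          agree_off S \<sigma> \<tau> \<longrightarrow> agree_off S \<sigma>' \<tau>' \<longrightarrow> agree_on S \<sigma> \<sigma>' \<longrightarrow> agree_on S \<tau> \<tau>' \<longrightarrow>
          K \<sigma> \<tau> = K \<sigma>' \<tau>'" using assms(1) unfolding inMat_def by (elim conjE)
  then show ?thesis using assms(2-) by blast
qed

lemma inMat_D2:
  assumes "inMat p S K" "valid_cfg p \<sigma>" "valid_cfg p \<tau>" "\<not> agree_off S \<sigma> \<tau>"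
  shows "K \<sigma> \<tau> = 0"
  using assms unfolding inMat_def by blast

lemma inMat_D1:
  assumes "inMat p S K" "\<not> (valid_cfg p \<sigma> \<and> valid_cfg p \<tau>)"
  shows "K \<sigma> \<tau> = 0"
  using assms unfolding inMat_def by blast

lemma Eu_inMat: "inMat p {s} (Eu p s i j)"
  unfolding inMat_def Eu_def agree_on_def by auto

lemma agree_single:
  assumes "agree_off {s} \<rho> \<tau>" "\<rho> s = i" shows "\<rho> = \<tau>(s:=i)"
proof (rule ext)
  fix t show "\<rho> t = (\<tau>(s:=i)) t"
    by (cases "t = s") (use assms in \<open>auto simp: agree_off_def\<close>)
qed

lemma Eu_right:
  assumes c: "lk p S c" and v: "valid_cfg p \<sigma>" "valid_cfg p \<tau>" and i: "i < p s"
  shows "opmult p c (Eu p s i j) \<sigma> \<tau> = (if \<tau> s = j then c \<sigma> (\<tau>(s:=i)) else 0)"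
proof -
  have vu: "valid_cfg p (\<tau>(s:=i))" using valid_upd v i by blast
  have "opmult p c (Eu p s i j) \<sigma> \<tau> = (\<Sum>\<rho>\<in>{\<tau>(s:=i)}. c \<sigma> \<rho> * Eu p s i j \<rho> \<tau>)"
  proof (rule opmult_sum)
    show "finite {\<rho>. valid_cfg p \<rho> \<and> c \<sigma> \<rho> \<noteq> 0}" by (rule lk_nz_finite[OF c])
    show "finite {\<tau>(s:=i)}" by simp
    show "\<forall>\<rho>\<in>{\<tau>(s:=i)}. valid_cfg p \<rho>" using vu by simp
    fix \<rho> assume "valid_cfg p \<rho>" "\<rho> \<notin> {\<tau>(s:=i)}"
    then have "Eu p s i j \<rho> \<tau> = 0" using agree_single[of s \<rho> \<tau> i] by (auto simp: Eu_def)
    then show "c \<sigma> \<rho> * Eu p s i j \<rho> \<tau> = 0" by simp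
  qed
  also have "\<dots> = (if \<tau> s = j then c \<sigma> (\<tau>(s:=i)) else 0)"
    using vu v by (simp add: Eu_def agree_off_def)
  finally show ?thesis .
qed

lemma Eu_left:
  assumes v: "valid_cfg p \<sigma>" "valid_cfg p \<tau>" and j: "j < p s"
  shows "opmult p (Eu p s i j) c \<sigma> \<tau> = (if \<sigma> s = i then c (\<sigma>(s:=j)) \<tau> else 0)"
proof -
  have vu: "valid_cfg p (\<sigma>(s:=j))" using valid_upd v j by blast
  have nz: "\<And>\<rho>. Eu p s i j \<sigma> \<rho> \<noteq> 0 \<Longrightarrow> \<rho> = \<sigma>(s:=j)"
  proof -
    fix \<rho> assume "Eu p s i j \<sigma> \<rho> \<noteq> 0"
    then have "agree_off {s} \<rho> \<sigma>" "\<rho> s = j" by (auto simp: Eu_def agree_off_def split: if_splits)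
    then show "\<rho> = \<sigma>(s:=j)" by (rule agree_single)
  qed
  have "opmult p (Eu p s i j) c \<sigma> \<tau> = (\<Sum>\<rho>\<in>{\<sigma>(s:=j)}. Eu p s i j \<sigma> \<rho> * c \<rho> \<tau>)"
  proof (rule opmult_sum)
    have "{\<rho>. valid_cfg p \<rho> \<and> Eu p s i j \<sigma> \<rho> \<noteq> 0} \<subseteq> {\<sigma>(s:=j)}" using nz by blast
    then show "finite {\<rho>. valid_cfg p \<rho> \<and> Eu p s i j \<sigma> \<rho> \<noteq> 0}" by (rule finite_subset) simp
    show "finite {\<sigma>(s:=j)}" by simp
    show "\<forall>\<rho>\<in>{\<sigma>(s:=j)}. valid_cfg p \<rho>" using vu by simp
    fix \<rho> assume "valid_cfg p \<rho>" "\<rho> \<notin> {\<sigma>(s:=j)}"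
    then have "Eu p s i j \<sigma> \<rho> = 0" using nz by blast
    then show "Eu p s i j \<sigma> \<rho> * c \<rho> \<tau> = 0" by simp
  qed
  also have "\<dots> = (if \<sigma> s = i then c (\<sigma>(s:=j)) \<tau> else 0)"
    using vu v by (simp add: Eu_def agree_off_def)
  finally show ?thesis .
qed

lemma drop_site:
  assumes c: "inMat p S c"
    and comm: "\<And>i j. i < p s \<Longrightarrow> j < p s \<Longrightarrow> opmult p c (Eu p s i j) = opmult p (Eu p s i j) c"
  shows "inMat p (S - {s}) c"
proof -
  have lc: "lk p S c" using c by (rule inMat_lk)
  have F: "(if \<tau> s = j then c \<sigma> (\<tau>(s:=i)) else 0) = (if \<sigma> s = i then c (\<sigma>(s:=j)) \<tau> else 0)"
    if "valid_cfg p \<sigma>" "valid_cfg p \<tau>" "i < p s" "j < p s" for \<sigma> \<tau> i j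
    using comm[OF that(3,4)] Eu_right[OF lc that(1,2,3), of j] Eu_left[OF that(1,2,4), of i c]
    by metis
  have Z: "c \<sigma> \<tau> = 0" if "valid_cfg p \<sigma>" "valid_cfg p \<tau>" "\<sigma> s \<noteq> \<tau> s" for \<sigma> \<tau>
  proof -
    have "\<tau> s < p s" using that(2) by (simp add: valid_cfg_def)
    from F[OF that(1,2) this this] that(3) show ?thesis by simp
  qed
  have Sh: "c \<sigma> \<tau> = c (\<sigma>(s:=k)) (\<tau>(s:=k))"
    if "valid_cfg p \<sigma>" "valid_cfg p \<tau>" "\<sigma> s = \<tau> s" "k < p s" for \<sigma> \<tau> k
  proof -
    have "\<tau> s < p s" using that(2) by (simp add: valid_cfg_def)
    have v1: "valid_cfg p (\<sigma>(s:=k))" using valid_upd[OF that(1) that(4)] .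
    from F[OF v1 that(2) that(4) \<open>\<tau> s < p s\<close>] have
      "c (\<sigma>(s:=k)) (\<tau>(s:=k)) = c (\<sigma>(s:=k, s:=\<tau> s)) \<tau>" by simp
    also have "\<sigma>(s:=k, s:=\<tau> s) = \<sigma>" using that(3) by auto
    finally show ?thesis by (rule sym)
  qed
  show ?thesis
    unfolding inMat_def
  proof (intro conjI allI impI)
    show "finite (S - {s})" using c by (simp add: inMat_def)
    fix \<sigma> \<tau> assume "\<not> (valid_cfg p \<sigma> \<and> valid_cfg p \<tau>)"
    then show "c \<sigma> \<tau> = 0" using c inMat_D1 by blast
  next
    fix \<sigma> \<tau> assume v: "valid_cfg p \<sigma>" "valid_cfg p \<tau>" and na: "\<not> agree_off (S - {s}) \<sigma> \<tau>"
    show "c \<sigma> \<tau> = 0"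
    proof (cases "\<sigma> s = \<tau> s")
      case True
      then have "\<not> agree_off S \<sigma> \<tau>" using na by (auto simp: agree_off_def)
      then show ?thesis using c v inMat_D2 by blast
    next
      case False then show ?thesis using Z v by blast
    qed
  next
    fix \<sigma> \<tau> \<sigma>' \<tau>'
    assume v: "valid_cfg p \<sigma>" "valid_cfg p \<tau>" "valid_cfg p \<sigma>'" "valid_cfg p \<tau>'"
      and a1: "agree_off (S - {s}) \<sigma> \<tau>" and a2: "agree_off (S - {s}) \<sigma>' \<tau>'"
      and o1: "agree_on (S - {s}) \<sigma> \<sigma>'" and o2: "agree_on (S - {s}) \<tau> \<tau>'"
    let ?k = "\<sigma>' s"
    have k: "?k < p s" using v(3) by (simp add: valid_cfg_def)
    have e1: "\<sigma> s = \<tau> s" using a1 by (simp add: agree_off_def)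
    have e2: "\<sigma>' s = \<tau>' s" using a2 by (simp add: agree_off_def)
    have "c \<sigma> \<tau> = c (\<sigma>(s:=?k)) (\<tau>(s:=?k))" by (rule Sh[OF v(1,2) e1 k])
    also have "\<dots> = c \<sigma>' \<tau>'"
    proof -
      have "valid_cfg p (\<sigma>(s:=?k))" "valid_cfg p (\<tau>(s:=?k))" using valid_upd[OF v(1) k] valid_upd[OF v(2) k] by auto
      moreover have "agree_off S (\<sigma>(s:=?k)) (\<tau>(s:=?k))" using a1 by (auto simp: agree_off_def)
      moreover have "agree_off S \<sigma>' \<tau>'" using a2 by (auto simp: agree_off_def)
      moreover have "agree_on S (\<sigma>(s:=?k)) \<sigma>'" using o1 by (auto simp: agree_on_def)
      moreover have "agree_on S (\<tau>(s:=?k)) \<tau>'" using o2 e2 by (auto simp: agree_on_def)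
      ultimately show ?thesis using inMat_D3[OF c _ _ v(3,4)] by blast
    qed
    finally show "c \<sigma> \<tau> = c \<sigma>' \<tau>'" .
  qed
qed



lemma inMat_Int:
  assumes S: "inMat p S K" and T: "inMat p T K" shows "inMat p (S \<inter> T) K"
  unfolding inMat_def
proof (intro conjI allI impI)
  show "finite (S \<inter> T)" using S by (simp add: inMat_def)
  fix \<sigma> \<tau> assume "\<not> (valid_cfg p \<sigma> \<and> valid_cfg p \<tau>)"
  then show "K \<sigma> \<tau> = 0" using S inMat_D1 by blast
next
  fix \<sigma> \<tau> assume v: "valid_cfg p \<sigma>" "valid_cfg p \<tau>" and na: "\<not> agree_off (S \<inter> T) \<sigma> \<tau>"
  show "K \<sigma> \<tau> = 0"
  proof (cases "agree_off S \<sigma> \<tau>")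
    case True
    then have "\<not> agree_off T \<sigma> \<tau>" using na by (auto simp: agree_off_def)
    then show ?thesis using T v inMat_D2 by blast
  next
    case False then show ?thesis using S v inMat_D2 by blast
  qed
next
  fix \<sigma> \<tau> \<sigma>' \<tau>'
  assume v: "valid_cfg p \<sigma>" "valid_cfg p \<tau>" "valid_cfg p \<sigma>'" "valid_cfg p \<tau>'"
    and a1: "agree_off (S \<inter> T) \<sigma> \<tau>" and a2: "agree_off (S \<inter> T) \<sigma>' \<tau>'"
    and o1: "agree_on (S \<inter> T) \<sigma> \<sigma>'" and o2: "agree_on (S \<inter> T) \<tau> \<tau>'"
  define \<mu> where "\<mu> = (\<lambda>t. if t \<in> S then \<sigma> t else \<sigma>' t)"
  define \<nu> where "\<nu> = (\<lambda>t. if t \<in> S then \<tau> t else \<tau>' t)"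
  have vm: "valid_cfg p \<mu>"
  proof -
    have "{t. \<mu> t \<noteq> 0} \<subseteq> {t. \<sigma> t \<noteq> 0} \<union> {t. \<sigma>' t \<noteq> 0}" by (auto simp: \<mu>_def)
    moreover have "finite ({t. \<sigma> t \<noteq> 0} \<union> {t. \<sigma>' t \<noteq> 0})" using v by (simp add: valid_cfg_def)
    ultimately have "finite {t. \<mu> t \<noteq> 0}" by (rule finite_subset)
    moreover have "\<forall>t. \<mu> t < p t" using v by (simp add: valid_cfg_def \<mu>_def)
    ultimately show ?thesis by (simp add: valid_cfg_def)
  qed
  have vn: "valid_cfg p \<nu>"
  proof -
    have "{t. \<nu> t \<noteq> 0} \<subseteq> {t. \<tau> t \<noteq> 0} \<union> {t. \<tau>' t \<noteq> 0}" by (auto simp: \<nu>_def)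
    moreover have "finite ({t. \<tau> t \<noteq> 0} \<union> {t. \<tau>' t \<noteq> 0})" using v by (simp add: valid_cfg_def)
    ultimately have "finite {t. \<nu> t \<noteq> 0}" by (rule finite_subset)
    moreover have "\<forall>t. \<nu> t < p t" using v by (simp add: valid_cfg_def \<nu>_def)
    ultimately show ?thesis by (simp add: valid_cfg_def)
  qed
  have "K \<sigma> \<tau> = K \<mu> \<nu>"
  proof (rule inMat_D3[OF S v(1,2) vm vn])
    show "agree_off S \<sigma> \<tau>" using a1 by (auto simp: agree_off_def)
    show "agree_off S \<mu> \<nu>" using a2 by (auto simp: agree_off_def \<mu>_def \<nu>_def)
    show "agree_on S \<sigma> \<mu>" by (simp add: agree_on_def \<mu>_def)
    show "agree_on S \<tau> \<nu>" by (simp add: agree_on_def \<nu>_def)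
  qed
  also have "\<dots> = K \<sigma>' \<tau>'"
  proof (rule inMat_D3[OF T vm vn v(3,4)])
    show "agree_off T \<mu> \<nu>" using a1 a2 by (auto simp: agree_off_def \<mu>_def \<nu>_def)
    show "agree_off T \<sigma>' \<tau>'" using a2 by (auto simp: agree_off_def)
    show "agree_on T \<mu> \<sigma>'" using o1 by (auto simp: agree_on_def \<mu>_def)
    show "agree_on T \<nu> \<tau>'" using o2 by (auto simp: agree_on_def \<nu>_def)
  qed
  finally show "K \<sigma> \<tau> = K \<sigma>' \<tau>'" .
qed

lemma inMat_mono:
  assumes S: "inMat p S K" and ST: "S \<subseteq> T" and fT: "finite T" shows "inMat p T K"
  unfolding inMat_def
proof (intro conjI allI impI)
  show "finite T" by fact
  fix \<sigma> \<tau> assume "\<not> (valid_cfg p \<sigma> \<and> valid_cfg p \<tau>)"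
  then show "K \<sigma> \<tau> = 0" using S inMat_D1 by blast
next
  fix \<sigma> \<tau> assume v: "valid_cfg p \<sigma>" "valid_cfg p \<tau>" and na: "\<not> agree_off T \<sigma> \<tau>"
  then have "\<not> agree_off S \<sigma> \<tau>" using ST by (auto simp: agree_off_def)
  then show "K \<sigma> \<tau> = 0" using S v inMat_D2 by blast
next
  fix \<sigma> \<tau> \<sigma>' \<tau>'
  assume v: "valid_cfg p \<sigma>" "valid_cfg p \<tau>" "valid_cfg p \<sigma>'" "valid_cfg p \<tau>'"
    and a1: "agree_off T \<sigma> \<tau>" and a2: "agree_off T \<sigma>' \<tau>'"
    and o1: "agree_on T \<sigma> \<sigma>'" and o2: "agree_on T \<tau> \<tau>'"
  have pt: "(\<sigma> t = \<tau> t) \<longleftrightarrow> (\<sigma>' t = \<tau>' t)" for t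
    using a1 a2 o1 o2 unfolding agree_off_def agree_on_def by metis
  have eq: "agree_off S \<sigma> \<tau> \<longleftrightarrow> agree_off S \<sigma>' \<tau>'"
    using pt by (simp add: agree_off_def)
  show "K \<sigma> \<tau> = K \<sigma>' \<tau>'"
  proof (cases "agree_off S \<sigma> \<tau>")
    case True
    show ?thesis
    proof (rule inMat_D3[OF S v])
      show "agree_off S \<sigma> \<tau>" by fact
      show "agree_off S \<sigma>' \<tau>'" using True eq by simp
      show "agree_on S \<sigma> \<sigma>'" using o1 ST by (auto simp: agree_on_def)
      show "agree_on S \<tau> \<tau>'" using o2 ST by (auto simp: agree_on_def)
    qed
  next
    case False
    then have "K \<sigma> \<tau> = 0" using S v inMat_D2 by blast
    moreover have "K \<sigma>' \<tau>' = 0" using False eq S v inMat_D2 by blast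
    ultimately show ?thesis by simp
  qed
qed

lemma inMat_Supp:
  assumes S: "inMat p S K" shows "inMat p (Supp p K) K"
proof -
  obtain S0 where S0: "inMat p S0 K" and mn: "\<forall>T. inMat p T K \<longrightarrow> card S0 \<le> card T"
    using ex_has_least_nat[of "\<lambda>T. inMat p T K" S card] S by blast
  have fS0: "finite S0" using S0 by (simp add: inMat_def)
  have sub: "S0 \<subseteq> T" if "inMat p T K" for T
  proof -
    have I: "inMat p (S0 \<inter> T) K" using inMat_Int[OF S0 that] .
    then have "card S0 \<le> card (S0 \<inter> T)" using mn by blast
    then have "S0 \<inter> T = S0" using card_subset_eq[OF fS0, of "S0 \<inter> T"] card_mono[OF fS0, of "S0 \<inter> T"] by auto
    then show ?thesis by blast
  qed
  have "Supp p K = S0"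
    unfolding Supp_def using sub S0 by blast
  then show ?thesis using S0 by simp
qed

lemma Supp_sub: "inMat p S K \<Longrightarrow> Supp p K \<subseteq> S"
  unfolding Supp_def by blast

lemma nbhd_mono: "S \<subseteq> T \<Longrightarrow> nbhd S l \<subseteq> nbhd T l"
  unfolding nbhd_def by blast

lemma nbhd_finite: "finite (nbhd {s :: ('d::finite) site} l)"
proof -
  have "nbhd {s} l \<subseteq> PiE UNIV (\<lambda>i. {s i - int l .. s i + int l})"
  proof
    fix t assume t: "t \<in> nbhd {s} l"
    have "t i \<in> {s i - int l .. s i + int l}" for i
    proof -
      have "\<bar>t i - s i\<bar> \<le> int l" using t unfolding nbhd_def by blast
      then show ?thesis by (simp add: abs_le_iff)
    qed
    then show "t \<in> PiE UNIV (\<lambda>i. {s i - int l .. s i + int l})"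
      unfolding PiE_UNIV_domain by blast
  qed
  moreover have "finite (PiE (UNIV :: 'd set) (\<lambda>i. {s i - int l .. s i + int l}))"
    by (intro finite_PiE) auto
  ultimately show ?thesis by (rule finite_subset)
qed



lemma core:
  assumes c: "lk p Sc c" and fU: "finite U"
    and ab: "\<And>k. k < n \<Longrightarrow> lk p U (a k) \<and> lk p U (b k)"
    and cm: "\<And>k. k < n \<Longrightarrow> opmult p c (a k) = opmult p (a k) c \<and> opmult p c (b k) = opmult p (b k) c"
  shows "opmult p c (\<lambda>\<sigma> \<tau>. \<Sum>k<n. opmult p (a k) (b k) \<sigma> \<tau>)
       = opmult p (\<lambda>\<sigma> \<tau>. \<Sum>k<n. opmult p (a k) (b k) \<sigma> \<tau>) c"
proof -
  have step: "opmult p c (opmult p (a k) (b k)) = opmult p (opmult p (a k) (b k)) c" if k: "k < n" for k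
  proof -
    have la: "lk p U (a k)" and lb: "lk p U (b k)" using ab[OF k] by auto
    have "opmult p c (opmult p (a k) (b k)) = opmult p (opmult p c (a k)) (b k)"
      by (rule opmult_assoc[OF c la, symmetric])
    also have "\<dots> = opmult p (opmult p (a k) c) (b k)" using cm[OF k] by simp
    also have "\<dots> = opmult p (a k) (opmult p c (b k))" by (rule opmult_assoc[OF la c])
    also have "\<dots> = opmult p (a k) (opmult p (b k) c)" using cm[OF k] by simp
    also have "\<dots> = opmult p (opmult p (a k) (b k)) c" by (rule opmult_assoc[OF la lb, symmetric])
    finally show ?thesis .
  qed
  have lab: "lk p U (opmult p (a k) (b k))" if k: "k < n" for k
    using lk_opmult[of p U "a k" U "b k"] ab[OF k] by simp
  have "opmult p c (\<lambda>\<sigma> \<tau>. \<Sum>k<n. opmult p (a k) (b k) \<sigma> \<tau>)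
      = (\<lambda>\<sigma> \<tau>. \<Sum>k<n. opmult p c (opmult p (a k) (b k)) \<sigma> \<tau>)"
    by (rule opmult_sum_right[OF c])
  also have "\<dots> = (\<lambda>\<sigma> \<tau>. \<Sum>k<n. opmult p (opmult p (a k) (b k)) c \<sigma> \<tau>)"
    using step by simp
  also have "\<dots> = opmult p (\<lambda>\<sigma> \<tau>. \<Sum>k<n. opmult p (a k) (b k) \<sigma> \<tau>) c"
    by (rule opmult_sum_left[symmetric, OF lab fU])
  finally show ?thesis .
qed

lemma decomp:
  fixes p :: "('d::finite) site \<Rightarrow> nat"
  assumes inv: "invertible_spread p A l"
  shows "\<exists>(n::nat) a b. Eu p s i j = (\<lambda>\<sigma> \<tau>. \<Sum>k<n. opmult p (a k) (b k) \<sigma> \<tau>) \<and>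
     (\<forall>k<n. a k \<in> A \<and> b k \<in> commutant p A \<and> inMat p (nbhd {s} l) (a k) \<and> inMat p (nbhd {s} l) (b k))"
proof -
  have AM: "A \<subseteq> MatZ p" using inv by (simp add: invertible_spread_def unital_star_subalg_def)
  have CM: "commutant p A \<subseteq> MatZ p" by (auto simp: commutant_def)
  have EM: "Eu p s i j \<in> MatZ p" unfolding MatZ_def using Eu_inMat[of p s i j] by blast
  have D: "\<forall>x\<in>MatZ p. \<exists>(n::nat) a b.
        x = (\<lambda>\<sigma> \<tau>. \<Sum>i<n. opmult p (a i) (b i) \<sigma> \<tau>) \<and>
        (\<forall>i<n. a i \<in> A \<and> b i \<in> commutant p A \<and>
               Supp p (a i) \<subseteq> nbhd (Supp p x) l \<and> Supp p (b i) \<subseteq> nbhd (Supp p x) l)"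
    using inv unfolding invertible_spread_def by blast
  from bspec[OF D EM] obtain n :: nat where "\<exists>a b. Eu p s i j = (\<lambda>\<sigma> \<tau>. \<Sum>k<n. opmult p (a k) (b k) \<sigma> \<tau>) \<and>
        (\<forall>k<n. a k \<in> A \<and> b k \<in> commutant p A \<and>
               Supp p (a k) \<subseteq> nbhd (Supp p (Eu p s i j)) l \<and> Supp p (b k) \<subseteq> nbhd (Supp p (Eu p s i j)) l)"
    by blast
  then obtain a :: "nat \<Rightarrow> 'd op" where "\<exists>b. Eu p s i j = (\<lambda>\<sigma> \<tau>. \<Sum>k<n. opmult p (a k) (b k) \<sigma> \<tau>) \<and>
        (\<forall>k<n. a k \<in> A \<and> b k \<in> commutant p A \<and>
               Supp p (a k) \<subseteq> nbhd (Supp p (Eu p s i j)) l \<and> Supp p (b k) \<subseteq> nbhd (Supp p (Eu p s i j)) l)"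
    by blast
  then obtain b :: "nat \<Rightarrow> 'd op" where P: "Eu p s i j = (\<lambda>\<sigma> \<tau>. \<Sum>k<n. opmult p (a k) (b k) \<sigma> \<tau>) \<and>
        (\<forall>k<n. a k \<in> A \<and> b k \<in> commutant p A \<and>
               Supp p (a k) \<subseteq> nbhd (Supp p (Eu p s i j)) l \<and> Supp p (b k) \<subseteq> nbhd (Supp p (Eu p s i j)) l)"
    by blast
  note x = conjunct1[OF P]
  note H = conjunct2[OF P]
  have N: "nbhd (Supp p (Eu p s i j)) l \<subseteq> nbhd {s} l"
    by (rule nbhd_mono) (rule Supp_sub[OF Eu_inMat])
  have loc: "inMat p (nbhd {s} l) y" if yM: "y \<in> MatZ p" and yS: "Supp p y \<subseteq> nbhd {s} l" for y
  proof -
    obtain S where "inMat p S y" using yM by (auto simp: MatZ_def)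
    then have "inMat p (Supp p y) y" by (rule inMat_Supp)
    then show ?thesis using yS nbhd_finite inMat_mono by blast
  qed
  have "\<forall>k<n. a k \<in> A \<and> b k \<in> commutant p A \<and> inMat p (nbhd {s} l) (a k) \<and> inMat p (nbhd {s} l) (b k)"
  proof (intro allI impI)
    fix k assume k: "k < n"
    then have "a k \<in> A" "b k \<in> commutant p A" "Supp p (a k) \<subseteq> nbhd {s} l" "Supp p (b k) \<subseteq> nbhd {s} l"
      using H N by blast+
    then show "a k \<in> A \<and> b k \<in> commutant p A \<and> inMat p (nbhd {s} l) (a k) \<and> inMat p (nbhd {s} l) (b k)"
      using loc AM CM by blast
  qed
  then show ?thesis using x by blast
qed

lemma site_noncomm:
  assumes c: "inMat p S c" and s: "s \<in> Supp p c"
  shows "\<exists>i j. i < p s \<and> j < p s \<and> opmult p c (Eu p s i j) \<noteq> opmult p (Eu p s i j) c"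
proof (rule ccontr)
  assume "\<not> ?thesis"
  then have "inMat p (S - {s}) c" using drop_site[OF c] by blast
  then have "Supp p c \<subseteq> S - {s}" by (rule Supp_sub)
  then show False using s by blast
qed

theorem lemma2p2:
  fixes p :: "('d::finite) site \<Rightarrow> nat" and A :: "'d op set" and l :: nat
  assumes "\<forall>s. 0 < p s"
    and "invertible_spread p A l"
  shows "VS p A \<and> VS p (commutant p A)"
proof -
  have inv: "invertible_spread p A l" by fact
  have l0: "0 < l" using inv by (simp add: invertible_spread_def)
  have AM: "A \<subseteq> MatZ p" using inv by (simp add: invertible_spread_def unital_star_subalg_def)
  have fN: "finite (nbhd {s} l)" for s :: "'d site" by (rule nbhd_finite)
  have gen: "\<exists>k<n. opmult p c (a k) \<noteq> opmult p (a k) c \<or> opmult p c (b k) \<noteq> opmult p (b k) c"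
    if c: "c \<in> MatZ p" and s: "s \<in> Supp p c"
      and ab: "\<forall>k<n. inMat p (nbhd {s} l) (a k) \<and> inMat p (nbhd {s} l) (b k)"
      and E: "opmult p c (Eu p s i j) \<noteq> opmult p (Eu p s i j) c"
      and x: "Eu p s i j = (\<lambda>\<sigma> \<tau>. \<Sum>k<n. opmult p (a k) (b k) \<sigma> \<tau>)"
    for c s and n :: nat and a b i j
  proof (rule ccontr)
    assume "\<not> ?thesis"
    then have cm: "\<And>k. k < n \<Longrightarrow> opmult p c (a k) = opmult p (a k) c \<and> opmult p c (b k) = opmult p (b k) c"
      by blast
    obtain S where cS: "inMat p S c" using c by (auto simp: MatZ_def)
    have "opmult p c (Eu p s i j) = opmult p (Eu p s i j) c"
      unfolding x
    proof (rule core[OF inMat_lk[OF cS] fN[of s]])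
      fix k assume "k < n"
      then show "lk p (nbhd {s} l) (a k) \<and> lk p (nbhd {s} l) (b k)" using ab inMat_lk by blast
    next
      fix k assume "k < n"
      then show "opmult p c (a k) = opmult p (a k) c \<and> opmult p c (b k) = opmult p (b k) c" by (rule cm)
    qed
    then show False using E by simp
  qed
  have VA: "VS p A"
    unfolding VS_def
  proof (intro exI[of _ l] conjI ballI impI)
    show "0 < l" by fact
    fix c s assume cA: "c \<in> A" and s: "s \<in> Supp p c"
    have cM: "c \<in> MatZ p" using cA AM by blast
    obtain S where cS: "inMat p S c" using cM by (auto simp: MatZ_def)
    obtain i j where E: "opmult p c (Eu p s i j) \<noteq> opmult p (Eu p s i j) c"
      using site_noncomm[OF cS s] by blast
    obtain n :: nat and a b where x: "Eu p s i j = (\<lambda>\<sigma> \<tau>. \<Sum>k<n. opmult p (a k) (b k) \<sigma> \<tau>)"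
      and H: "\<forall>k<n. a k \<in> A \<and> b k \<in> commutant p A \<and> inMat p (nbhd {s} l) (a k) \<and> inMat p (nbhd {s} l) (b k)"
      using decomp[OF inv] by blast
    obtain k where k: "k < n" and nc: "opmult p c (a k) \<noteq> opmult p (a k) c \<or> opmult p c (b k) \<noteq> opmult p (b k) c"
      using gen[OF cM s _ E x] H by blast
    have "opmult p c (b k) = opmult p (b k) c" using H k cA by (auto simp: commutant_def)
    then have "opmult p c (a k) \<noteq> opmult p (a k) c" using nc by blast
    then show "\<exists>w\<in>A. inMat p (nbhd {s} l) w \<and> opmult p c w \<noteq> opmult p w c" using H k by blast
  qed
  have VB: "VS p (commutant p A)"
    unfolding VS_def
  proof (intro exI[of _ l] conjI ballI impI)
    show "0 < l" by fact
    fix c s assume cB: "c \<in> commutant p A" and s: "s \<in> Supp p c"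
    have cM: "c \<in> MatZ p" using cB by (simp add: commutant_def)
    obtain S where cS: "inMat p S c" using cM by (auto simp: MatZ_def)
    obtain i j where E: "opmult p c (Eu p s i j) \<noteq> opmult p (Eu p s i j) c"
      using site_noncomm[OF cS s] by blast
    obtain n :: nat and a b where x: "Eu p s i j = (\<lambda>\<sigma> \<tau>. \<Sum>k<n. opmult p (a k) (b k) \<sigma> \<tau>)"
      and H: "\<forall>k<n. a k \<in> A \<and> b k \<in> commutant p A \<and> inMat p (nbhd {s} l) (a k) \<and> inMat p (nbhd {s} l) (b k)"
      using decomp[OF inv] by blast
    obtain k where k: "k < n" and nc: "opmult p c (a k) \<noteq> opmult p (a k) c \<or> opmult p c (b k) \<noteq> opmult p (b k) c"
      using gen[OF cM s _ E x] H by blast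
    have "opmult p (a k) c = opmult p c (a k)" using H k cB by (auto simp: commutant_def)
    then have "opmult p c (b k) \<noteq> opmult p (b k) c" using nc by metis
    then show "\<exists>w\<in>commutant p A. inMat p (nbhd {s} l) w \<and> opmult p c w \<noteq> opmult p w c" using H k by blast
  qed
  show ?thesis using VA VB by blast
qed


end
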